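(* Assume (i) the subpolynomial prime gap hypothesis: for every real $\delta>0$ there exists $x_0$ such that for every natural number $x\ge x_0$ there is a prime $p$ with $x-x^{\delta}<p\le x$; and (ii) the Sidon upper bound hypothesis: for every real $\varepsilon>0$ there exist $C\ge0$ and $N_0\in\mathbb{N}$ with $h(N)\le\sqrt{N}+CN^{\varepsilon}$ for all $N\ge N_0$. Then for every real $\varepsilon>0$ there exist $C\ge0$ and $N_0\in\mathbb{N}$ such that $|h(N)-\sqrt{N}|\le C N^{\varepsilon}$ for all $N\ge N_0$.
   Context: A finite set $A\subseteq\mathbb{Z}$ is Sidon if $a+b=c+d$ with $a,b,c,d\in A$ implies $\{a,b\}=\{c,d\}$ as unordered pairs. For a natural number $N$, $h(N)=\max\{|A| : A\subseteq\{1,\dots,N\},\ A\text{ Sidon}\}$. *)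

theory Defs
  imports "HOL-Analysis.Analysis" "HOL-Computational_Algebra.Primes"
begin

definition sidon :: "int set \<Rightarrow> bool" where
  "sidon A \<longleftrightarrow> finite A \<and>
     (\<forall>a\<in>A. \<forall>b\<in>A. \<forall>c\<in>A. \<forall>d\<in>A. a + b = c + d \<longrightarrow> {a, b} = {c, d})"

definition h :: "nat \<Rightarrow> nat" where
  "h N = Max {card A | A. A \<subseteq> {1..int N} \<and> sidon A}"

end

theory Submission imports Defs "HOL-Number_Theory.Number_Theory" begin
lemma exp_inj:
  fixes p g a c :: nat
  assumes p: "prime p" and g: "residue_primroot p g" and ac: "a < p - 1" "c < p - 1"
    and d: "int p dvd int (g ^ c) - int (g ^ a)"
  shows "a = c"
proof -
  have ord: "ord p g = p - 1" and cop: "coprime p g"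
    using g p by (auto simp: residue_primroot_def totient_prime)
  have "[int (g ^ c) = int (g ^ a)] (mod int p)" using d by (simp add: cong_iff_dvd_diff)
  hence "[g ^ c = g ^ a] (mod p)" using cong_int_iff by blast
  hence "[c = a] (mod p - 1)" using order_divides_expdiff[OF cop] ord by simp
  thus ?thesis using ac cong_less_modulus_unique_nat by metis
qed

lemma exp_prod:
  fixes p g a b c d :: nat
  assumes p: "prime p" and g: "residue_primroot p g"
    and dv: "int (p - 1) dvd int a + int b - int c - int d"
  shows "int p dvd int (g ^ a) * int (g ^ b) - int (g ^ c) * int (g ^ d)"
proof -
  have ord: "ord p g = p - 1" and cop: "coprime p g"
    using g p by (auto simp: residue_primroot_def totient_prime)
  have "[int (a + b) = int (c + d)] (mod int (p - 1))" using dv by (simp add: cong_iff_dvd_diff algebra_simps)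
  hence "[a + b = c + d] (mod p - 1)" using cong_int_iff by blast
  hence "[g ^ (a + b) = g ^ (c + d)] (mod p)" using order_divides_expdiff[OF cop] ord by simp
  hence "[int (g ^ (a + b)) = int (g ^ (c + d))] (mod int p)" by (rule cong_int_iff[THEN iffD2])
  thus ?thesis by (simp add: cong_iff_dvd_diff power_add)
qed

lemma two_sets:
  fixes p :: int and u v s t :: int
  assumes p: "prime p" and s1: "p dvd u + v - s - t" and s2: "p dvd u * v - s * t"
  shows "p dvd s - u \<and> p dvd t - v \<or> p dvd s - v \<and> p dvd t - u"
proof -
  have e: "(s - u) * (s - v) = (u * v - s * t) - s * (u + v - s - t)"
    by (simp add: algebra_simps)
  have "p dvd (s - u) * (s - v)" unfolding e using s1 s2 by simp
  hence "p dvd s - u \<or> p dvd s - v" using p prime_dvd_mult_iff by blast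
  moreover have "t - v = (u + v - s - t) * (-1) - (s - u)" "t - u = (u + v - s - t) * (-1) - (s - v)"
    by (simp_all add: algebra_simps)
  moreover have "p dvd (u + v - s - t) * (-1)" using s1 by (rule dvd_mult2)
  ultimately show ?thesis by (metis dvd_diff)
qed

lemma h_ge:
  assumes "A \<subseteq> {1..int N}" "sidon A"
  shows "card A \<le> h N"
proof -
  have "{card A | A. A \<subseteq> {1..int N} \<and> sidon A} \<subseteq> {..N}"
  proof
    fix k assume "k \<in> {card A | A. A \<subseteq> {1..int N} \<and> sidon A}"
    then obtain B where B: "k = card B" "B \<subseteq> {1..int N}" by auto
    have "card B \<le> card {1..int N}" using B by (intro card_mono) auto
    thus "k \<in> {..N}" using B by simp
  qed
  hence "finite {card A | A. A \<subseteq> {1..int N} \<and> sidon A}" using finite_subset by blast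
  thus ?thesis unfolding h_def using assms by (intro Max_ge) auto
qed

lemma ruzsa_lower:
  assumes p: "prime p" and N: "p * (p - 1) \<le> N"
  shows "p - 1 \<le> h N"
proof -
  obtain g where g: "residue_primroot p g" using prime_primitive_root_exists p prime_gt_1_nat by blast
  have p2: "p \<ge> 2" using p prime_ge_2_nat by blast
  define M where "M = int p * (int p - 1)"
  define G where "G i = int (g ^ i)" for i :: nat
  define x where "x i = int i * int p + (int p - 1) * (int p - G i)" for i :: nat
  define y where "y i = (x i - 1) mod M + 1" for i :: nat
  define Y where "Y = y ` {..<p-1}"
  have Mpos: "M > 0" using p2 by (simp add: M_def)
  have yx: "y i = x i - M * ((x i - 1) div M)" for i
    unfolding y_def using minus_div_mult_eq_mod[of "x i - 1" M] by (simp add: algebra_simps)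
  have yr: "1 \<le> y i \<and> y i \<le> M" for i
  proof -
    have "(x i - 1) mod M < M" "0 \<le> (x i - 1) mod M"
      using Mpos by (rule pos_mod_bound, rule pos_mod_sign)
    thus ?thesis unfolding y_def by linarith
  qed
  have pm1: "int (p - 1) = int p - 1" using p2 by simp
  have key: "(a = c \<and> b = d) \<or> (a = d \<and> b = c)"
    if abcd: "a < p - 1" "b < p - 1" "c < p - 1" "d < p - 1" and eq: "y a + y b = y c + y d" for a b c d
  proof -
    define k where "k = (x a - 1) div M + (x b - 1) div M - (x c - 1) div M - (x d - 1) div M"
    define E where "E = int a + int b - int c - int d"
    define F where "F = G c + G d - G a - G b"
    have D: "x a + x b - x c - x d = M * k"
      using eq unfolding yx k_def by (simp add: algebra_simps)
    have D2: "x a + x b - x c - x d = E * int p + (int p - 1) * F"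
      unfolding x_def E_def F_def by (simp add: algebra_simps)
    have "E = (int p - 1) * (int p * k - F - E)"
      using D D2 unfolding M_def by (simp add: algebra_simps)
    hence dE: "int (p - 1) dvd E" unfolding pm1 by (metis dvd_triv_left)
    have "F = int p * (F - (int p - 1) * k + E)"
      using D D2 unfolding M_def by (simp add: algebra_simps)
    hence dF: "int p dvd F" by (metis dvd_triv_left)
    have s1: "int p dvd G a + G b - G c - G d"
    proof -
      have "G a + G b - G c - G d = F * (-1)" unfolding F_def by simp
      thus ?thesis using dF by (metis dvd_mult2)
    qed
    have s2: "int p dvd G a * G b - G c * G d"
      using exp_prod[OF p g dE[unfolded E_def]] unfolding G_def .
    have pi: "prime (int p)" using p by simp
    have ij: "\<And>i j. i < p - 1 \<Longrightarrow> j < p - 1 \<Longrightarrow> int p dvd G j - G i \<Longrightarrow> i = j"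
      using exp_inj[OF p g] unfolding G_def by blast
    from two_sets[OF pi s1 s2] show ?thesis
    proof
      assume "int p dvd G c - G a \<and> int p dvd G d - G b"
      thus ?thesis using ij[of a c] ij[of b d] abcd by blast
    next
      assume "int p dvd G c - G b \<and> int p dvd G d - G a"
      thus ?thesis using ij[of b c] ij[of a d] abcd by blast
    qed
  qed
  have inj: "inj_on y {..<p-1}"
    by (rule inj_onI) (use key in force)
  have cardY: "card Y = p - 1" unfolding Y_def using inj by (simp add: card_image)
  have sub: "Y \<subseteq> {1..int N}"
  proof
    fix z assume "z \<in> Y"
    then obtain i where "z = y i" unfolding Y_def by auto
    moreover have "M \<le> int N"
    proof -
      have "int (p * (p - 1)) \<le> int N" using N by (simp only: of_nat_le_iff)
      thus ?thesis unfolding M_def using pm1 by (simp only: of_nat_mult)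
    qed
    ultimately show "z \<in> {1..int N}" using yr[of i] by auto
  qed
  have sid: "sidon Y"
    unfolding sidon_def
  proof (intro conjI ballI impI)
    show "finite Y" unfolding Y_def by simp
    fix a b c d assume "a \<in> Y" "b \<in> Y" "c \<in> Y" "d \<in> Y" "a + b = c + d"
    then obtain i j k l where "a = y i" "b = y j" "c = y k" "d = y l"
      "i < p - 1" "j < p - 1" "k < p - 1" "l < p - 1" unfolding Y_def by auto
    with key[of i j k l] \<open>a + b = c + d\<close> show "{a, b} = {c, d}" by auto
  qed
  show ?thesis using h_ge[OF sub sid] cardY by simp
qed

theorem mainTheorem15:
  assumes gap: "\<forall>\<delta>::real. \<delta> > 0 \<longrightarrow> (\<exists>x0::nat. \<forall>x::nat. x \<ge> x0 \<longrightarrow>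
                   (\<exists>p::nat. prime p \<and> real x - real x powr \<delta> < real p \<and> p \<le> x))"
      and sidon_ub: "\<forall>\<epsilon>::real. \<epsilon> > 0 \<longrightarrow> (\<exists>C::real. \<exists>N0::nat. C \<ge> 0 \<and>
                   (\<forall>N::nat. N \<ge> N0 \<longrightarrow> real (h N) \<le> sqrt (real N) + C * real N powr \<epsilon>))"
  shows "\<forall>\<epsilon>::real. \<epsilon> > 0 \<longrightarrow> (\<exists>C::real. \<exists>N0::nat. C \<ge> 0 \<and>
                   (\<forall>N::nat. N \<ge> N0 \<longrightarrow> \<bar>real (h N) - sqrt (real N)\<bar> \<le> C * real N powr \<epsilon>))"
proof (intro allI impI)
  fix \<epsilon> :: real assume e: "\<epsilon> > 0"
  obtain C1 N1 where C1: "C1 \<ge> 0" and ub: "\<And>N. N \<ge> N1 \<Longrightarrow> real (h N) \<le> sqrt (real N) + C1 * real N powr \<epsilon>"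
    using sidon_ub e by blast
  obtain x0 where x0: "\<And>x. x \<ge> x0 \<Longrightarrow> \<exists>p::nat. prime p \<and> real x - real x powr \<epsilon> < real p \<and> p \<le> x"
    using gap e by blast
  show "\<exists>C::real. \<exists>N0::nat. C \<ge> 0 \<and>
                   (\<forall>N::nat. N \<ge> N0 \<longrightarrow> \<bar>real (h N) - sqrt (real N)\<bar> \<le> C * real N powr \<epsilon>)"
  proof (intro exI conjI allI impI)
    show "max C1 3 \<ge> 0" by simp
    fix N :: nat assume NN: "N \<ge> max (max N1 (x0^2)) 1"
    hence N1: "N \<ge> N1" and Nx0: "x0^2 \<le> N" and Npos: "N \<ge> 1" by auto
    have pw1: "real N powr \<epsilon> \<ge> 1" using Npos e by (intro ge_one_powr_ge_zero) auto
    have upper: "real (h N) - sqrt (real N) \<le> max C1 3 * real N powr \<epsilon>"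
    proof -
      have "C1 * real N powr \<epsilon> \<le> max C1 3 * real N powr \<epsilon>"
        by (rule mult_right_mono) auto
      thus ?thesis using ub[OF N1] by linarith
    qed
    define x where "x = nat (floor (sqrt (real N)))"
    have sq0: "sqrt (real N) \<ge> 0" by simp
    have xle: "real x \<le> sqrt (real N)" unfolding x_def using sq0 by simp
    have xgt: "real x > sqrt (real N) - 1" unfolding x_def using sq0 by linarith
    have "real x0 \<le> sqrt (real N)"
    proof -
      have "real (x0^2) \<le> real N" using Nx0 by (simp only: of_nat_le_iff)
      hence "real x0 ^ 2 \<le> real N" by simp
      thus ?thesis by (rule real_le_rsqrt)
    qed
    hence xx0: "x \<ge> x0" unfolding x_def by (simp add: le_nat_floor)
    have s1: "sqrt (real N) \<ge> 1" using Npos by simp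
    have "sqrt (real N) * 1 \<le> sqrt (real N) * sqrt (real N)"
      using s1 sq0 by (rule mult_left_mono)
    hence "sqrt (real N) \<le> real N" by simp
    hence xN: "real x \<le> real N" using xle by linarith
    obtain p where p: "prime p" "real x - real x powr \<epsilon> < real p" "p \<le> x" using x0[OF xx0] by blast
    have "real x * real x \<le> real N"
    proof -
      have "real x * real x \<le> sqrt (real N) * sqrt (real N)"
        using xle by (intro mult_mono) auto
      thus ?thesis by simp
    qed
    hence "real (x * x) \<le> real N" by simp
    hence "x * x \<le> N" by (simp only: of_nat_le_iff)
    moreover have "p * (p - 1) \<le> x * x" using p(3) by (intro mult_mono) auto
    ultimately have "p - 1 \<le> h N" using ruzsa_lower[OF p(1)] by simp
    hence hp: "real p - 1 \<le> real (h N)" using prime_ge_1_nat[OF p(1)] by (simp add: of_nat_diff)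
    have "real x powr \<epsilon> \<le> real N powr \<epsilon>" using xN e by (intro powr_mono2) auto
    hence lower: "sqrt (real N) - real (h N) \<le> max C1 3 * real N powr \<epsilon>"
    proof -
      have "3 * real N powr \<epsilon> \<le> max C1 3 * real N powr \<epsilon>"
        by (rule mult_right_mono) auto
      thus ?thesis using hp p(2) xgt pw1 \<open>real x powr \<epsilon> \<le> real N powr \<epsilon>\<close> by linarith
    qed
    show "\<bar>real (h N) - sqrt (real N)\<bar> \<le> max C1 3 * real N powr \<epsilon>"
      using upper lower by linarith
  qed
qed

end
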